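(* If $\|W\|_2^2\le B_W^2$ and $0\le u_i\le B_u$ for all $i$, then the 2-norm of the gradient of $f$ and of each stochastic gradient $\nabla f_{ik}$ is bounded by $$B_f=N\max\{1,e^{B_u}-1\}+2\big(Ne^{B_u}B_x+\mu\max_k\{\beta_k\}B_W\big).$$
   Context: Data: $(y_i,x_i)$, $i=1,\dots,N$, $x_i\in\mathbb{R}^D$, $y_i\in\{1,\dots,K\}$, $K\ge2$; $\mu>0$; $u\in\mathbb{R}^N$, $W=[w_1,\dots,w_K]\in\mathbb{R}^{D\times K}$ with Frobenius norm $\|W\|_2$. Let $n_j=|\{i:y_i=j\}|$, $\beta_j=\frac{N}{n_j+(N-n_j)/(K-1)}$, and for $k\ne y_i$ $$f_{ik}(u,W)=N\big(u_i+e^{-u_i}+(K-1)e^{x_i^\top(w_k-w_{y_i})-u_i}\big)+\tfrac{\mu}{2}\big(\beta_{y_i}\|w_{y_i}\|_2^2+\beta_k\|w_k\|_2^2\big),$$ and $f=\mathbb{E}_{ik}[f_{ik}]$ with $i$ uniform on $\{1,\dots,N\}$ and $k$ uniform on $\{1,\dots,K\}\setminus\{y_i\}$. $B_W^2=\frac{2}{\mu}N\log K$, $B_x=\max_i\|x_i\|_2$, $B_u=\log(1+(K-1)e^{2B_xB_W})$. *)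

theory Defs
  imports "HOL-Analysis.Analysis"
begin

text \<open>Data: index type 'n of size N (samples i), feature type 'd of size D,
  class type 'k of size K.  x :: 'n => real^'d, y :: 'n => 'k.
  Parameters: u :: real^'n, W :: real^'d^'k (column w_k = W$k);
  the norm on real^'d^'k is the Frobenius norm.\<close>

definition ncount :: "('n::finite \<Rightarrow> 'k::finite) \<Rightarrow> 'k \<Rightarrow> real" where
  "ncount y j = real (card {i. y i = j})"

definition betaw :: "('n::finite \<Rightarrow> 'k::finite) \<Rightarrow> 'k \<Rightarrow> real" where
  "betaw y j = real CARD('n) /
     (ncount y j + (real CARD('n) - ncount y j) / (real CARD('k) - 1))"

definition fik :: "('n::finite \<Rightarrow> real^'d::finite) \<Rightarrow> ('n \<Rightarrow> 'k::finite) \<Rightarrow> real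
    \<Rightarrow> 'n \<Rightarrow> 'k \<Rightarrow> (real^'n) \<times> (real^'d^'k) \<Rightarrow> real" where
  "fik x y mu i k p = (let u = fst p; W = snd p in
     real CARD('n) * (u$i + exp (- u$i)
        + (real CARD('k) - 1) * exp (x i \<bullet> (W$k - W$(y i)) - u$i))
     + mu / 2 * (betaw y (y i) * (norm (W$(y i)))\<^sup>2 + betaw y k * (norm (W$k))\<^sup>2))"

definition ftot :: "('n::finite \<Rightarrow> real^'d::finite) \<Rightarrow> ('n \<Rightarrow> 'k::finite) \<Rightarrow> real
    \<Rightarrow> (real^'n) \<times> (real^'d^'k) \<Rightarrow> real" where
  "ftot x y mu p = (\<Sum>i\<in>UNIV. (1 / real CARD('n)) *
       (\<Sum>k\<in>UNIV - {y i}. (1 / (real CARD('k) - 1)) * fik x y mu i k p))"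

definition BW :: "'n::finite itself \<Rightarrow> 'k::finite itself \<Rightarrow> real \<Rightarrow> real" where
  "BW _ _ mu = sqrt (2 / mu * real CARD('n) * ln (real CARD('k)))"

definition Bx :: "('n::finite \<Rightarrow> real^'d::finite) \<Rightarrow> real" where
  "Bx x = Max (range (\<lambda>i. norm (x i)))"

definition Bu :: "('n::finite \<Rightarrow> real^'d::finite) \<Rightarrow> 'k::finite itself \<Rightarrow> real \<Rightarrow> real" where
  "Bu x K mu = ln (1 + (real CARD('k) - 1) * exp (2 * Bx x * BW TYPE('n) K mu))"

definition Bf :: "('n::finite \<Rightarrow> real^'d::finite) \<Rightarrow> ('n \<Rightarrow> 'k::finite) \<Rightarrow> real \<Rightarrow> real" where
  "Bf x y mu = real CARD('n) * max 1 (exp (Bu x TYPE('k) mu) - 1)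
     + 2 * (real CARD('n) * exp (Bu x TYPE('k) mu) * Bx x
            + mu * Max (range (betaw y)) * BW TYPE('n) TYPE('k) mu)"

end

theory Submission
  imports Defs
begin

lemma norm_axis_gen: "norm (axis i (c::'a::real_inner)) = norm c"
  by (simp add: norm_eq_sqrt_inner inner_axis_axis)

lemma has_derivative_vec_nth_my[derivative_intros]:
  "(f has_derivative f') F \<Longrightarrow> ((\<lambda>x. f x $ i) has_derivative (\<lambda>h. f' h $ i)) F"
  by (rule bounded_linear.has_derivative[OF bounded_linear_vec_nth])

lemma fik_deriv:
  fixes x :: "'n::finite \<Rightarrow> real^'d::finite" and y :: "'n \<Rightarrow> 'k::finite"
    and u :: "real^'n" and W :: "real^'d^'k" and i :: 'n and k :: 'k
  defines "E \<equiv> exp (x i \<bullet> (W$k - W$(y i)) - u$i)"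
  shows "GDERIV (fik x y mu i k) (u, W) :>
     (axis i (real CARD('n) * (1 - exp (- u$i) - (real CARD('k) - 1) * E)),
      axis k ((real CARD('n) * (real CARD('k) - 1) * E) *\<^sub>R x i + (mu * betaw y k) *\<^sub>R W$k)
    + axis (y i) (- (real CARD('n) * (real CARD('k) - 1) * E) *\<^sub>R x i + (mu * betaw y (y i)) *\<^sub>R W$(y i)))"
proof -
  have eq: "fik x y mu i k = (\<lambda>p. real CARD('n) * (fst p$i + exp (- fst p$i)
        + (real CARD('k) - 1) * exp (x i \<bullet> (snd p$k - snd p$(y i)) - fst p$i))
     + mu / 2 * (betaw y (y i) * (snd p$(y i) \<bullet> snd p$(y i)) + betaw y k * (snd p$k \<bullet> snd p$k)))"
    by (auto simp: fik_def Let_def power2_norm_eq_inner fun_eq_iff)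
  show ?thesis unfolding gderiv_def eq
    apply (rule has_derivative_eq_rhs)
     apply (rule derivative_eq_intros refl)+
    apply (auto simp: fun_eq_iff inner_axis E_def algebra_simps inner_commute)
    done
qed
theorem lemma4:
  fixes x :: "'n::finite \<Rightarrow> real^'d::finite"
    and y :: "'n \<Rightarrow> 'k::finite"
    and mu :: real
    and u :: "real^'n"
    and W :: "real^'d^'k"
  assumes K2: "CARD('k) \<ge> 2"
    and mu_pos: "mu > 0"
    and W_bd: "(norm W)\<^sup>2 \<le> (BW TYPE('n) TYPE('k) mu)\<^sup>2"
    and u_bd: "\<forall>i. 0 \<le> u$i \<and> u$i \<le> Bu x TYPE('k) mu"
  shows "(\<exists>G. (GDERIV (ftot x y mu) (u, W) :> G) \<and> norm G \<le> Bf x y mu)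
    \<and> (\<forall>i k. k \<noteq> y i \<longrightarrow>
         (\<exists>G. (GDERIV (fik x y mu i k) (u, W) :> G) \<and> norm G \<le> Bf x y mu))"
proof -
  define N where "N = real CARD('n)"
  define K where "K = real CARD('k)"
  define BWv where "BWv = BW TYPE('n) TYPE('k) mu"
  define Bxv where "Bxv = Bx x"
  define Buv where "Buv = Bu x TYPE('k) mu"
  define Mb where "Mb = Max (range (betaw y))"
  have N0: "N > 0" unfolding N_def by simp
  have K2': "K \<ge> 2" unfolding K_def using K2 by linarith
  have BW0: "BWv \<ge> 0"
  proof -
    have "ln (real CARD('k)) \<ge> 0" using K2 by simp
    thus ?thesis unfolding BWv_def BW_def using mu_pos by simp
  qed
  have nW: "norm W \<le> BWv" using power2_le_imp_le[OF W_bd] BW0 unfolding BWv_def by blast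
  have nWc: "norm (W$j) \<le> BWv" for j by (rule order_trans[OF Finite_Cartesian_Product.norm_nth_le nW])
  have nx: "norm (x i) \<le> Bxv" for i unfolding Bxv_def Bx_def by (rule Max_ge) auto
  have Bx0: "Bxv \<ge> 0" using nx[of undefined] norm_ge_zero[of "x undefined"] by linarith
  have bpos: "betaw y j \<ge> 0" for j
  proof -
    have "card {i. y i = j} \<le> card (UNIV :: 'n set)" by (rule card_mono) auto
    hence "ncount y j \<le> N" unfolding ncount_def N_def by simp
    moreover have "ncount y j \<ge> 0" unfolding ncount_def by simp
    ultimately show ?thesis unfolding betaw_def N_def[symmetric] K_def[symmetric] using K2'
      by (intro divide_nonneg_nonneg) (simp_all add: N0 less_imp_le)
  qed
  have bM: "betaw y j \<le> Mb" for j unfolding Mb_def by (rule Max_ge) auto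
  have expBu: "exp Buv = 1 + (K - 1) * exp (2 * Bxv * BWv)"
    unfolding Buv_def Bu_def K_def[symmetric] Bxv_def[symmetric] BWv_def[symmetric]
    using K2' by (simp add: add_pos_nonneg)
  have Ebd: "exp (x i \<bullet> (W$k - W$(y i)) - u$i) \<le> exp (2 * Bxv * BWv)" for i k
  proof -
    have "x i \<bullet> (W$k - W$(y i)) \<le> norm (x i) * norm (W$k - W$(y i))"
      by (rule order_trans[OF _ Cauchy_Schwarz_ineq2]) simp
    also have "\<dots> \<le> Bxv * (2 * BWv)"
    proof (rule mult_mono[OF nx])
      show "norm (W$k - W$(y i)) \<le> 2 * BWv"
        using norm_triangle_ineq4[of "W$k" "W$(y i)"] nWc[of k] nWc[of "y i"] by linarith
    qed (use Bx0 in auto)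
    finally have "x i \<bullet> (W$k - W$(y i)) \<le> 2 * Bxv * BWv" by simp
    thus ?thesis using u_bd[rule_format, of i] by simp
  qed
  define c where "c i k = N * (1 - exp (- u$i) - (K - 1) * exp (x i \<bullet> (W$k - W$(y i)) - u$i))" for i k
  define A where "A i k = (N * (K - 1) * exp (x i \<bullet> (W$k - W$(y i)) - u$i)) *\<^sub>R x i + (mu * betaw y k) *\<^sub>R W$k" for i k
  define B where "B i k = (- (N * (K - 1) * exp (x i \<bullet> (W$k - W$(y i)) - u$i))) *\<^sub>R x i + (mu * betaw y (y i)) *\<^sub>R W$(y i)" for i k
  define G where "G i k = (axis i (c i k), axis k (A i k) + axis (y i) (B i k))" for i k
  have D: "GDERIV (fik x y mu i k) (u, W) :> G i k" for i k
    using fik_deriv[where x=x and y=y and u=u and W=W and i=i and k=k and mu=mu] unfolding G_def c_def A_def B_def N_def K_def by simp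
  have aux: "(K - 1) * exp (x i \<bullet> (W$k - W$(y i)) - u$i) \<le> exp Buv - 1" for i k
    unfolding expBu using Ebd[of i k] K2' by simp
  have GB: "norm (G i k) \<le> Bf x y mu" for i k
  proof -
    define E where "E = exp (x i \<bullet> (W$k - W$(y i)) - u$i)"
    have E0: "E \<ge> 0" unfolding E_def by simp
    have KE: "(K - 1) * E \<le> exp Buv - 1" using aux[of i k] unfolding E_def .
    have KE0: "(K - 1) * E \<ge> 0" using E0 K2' by simp
    have eu: "exp (- u$i) \<le> 1" "exp (- u$i) > 0" using u_bd by auto
    have "\<bar>1 - exp (- u$i) - (K - 1) * E\<bar> \<le> max 1 (exp Buv - 1)"
      using KE KE0 eu max.cobounded1[of 1 "exp Buv - 1"] max.cobounded2[of 1 "exp Buv - 1"]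
      unfolding abs_le_iff by linarith
    hence c1: "norm (c i k) \<le> N * max 1 (exp Buv - 1)"
      unfolding c_def E_def[symmetric] using N0 by (simp add: abs_mult)
    have coef: "N * (K - 1) * E * norm (x i) \<le> N * exp Buv * Bxv"
    proof -
      have "(K - 1) * E * norm (x i) \<le> exp Buv * Bxv"
        using mult_mono[of "(K - 1) * E" "exp Buv" "norm (x i)" Bxv] KE nx[of i] KE0 by simp
      thus ?thesis using N0 by (simp add: mult.assoc)
    qed
    have bb: "mu * betaw y j * norm (W$j) \<le> mu * Mb * BWv" for j
    proof -
      have "betaw y j * norm (W$j) \<le> Mb * BWv"
        by (rule mult_mono[OF bM nWc]) (use bpos[of j] bM[of j] in auto)
      thus ?thesis using mu_pos by (simp add: mult.assoc mult_left_mono)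
    qed
    have "norm (A i k) \<le> N * (K - 1) * E * norm (x i) + mu * betaw y k * norm (W$k)"
      unfolding A_def E_def[symmetric]
      using norm_triangle_ineq[of "(N * (K - 1) * E) *\<^sub>R x i" "(mu * betaw y k) *\<^sub>R W$k"]
        E0 K2' N0 mu_pos bpos[of k] by (simp add: abs_mult)
    hence nA: "norm (A i k) \<le> N * exp Buv * Bxv + mu * Mb * BWv" using coef bb[of k] by linarith
    have "norm (B i k) \<le> N * (K - 1) * E * norm (x i) + mu * betaw y (y i) * norm (W$(y i))"
      unfolding B_def E_def[symmetric]
      using norm_triangle_ineq[of "(- (N * (K - 1) * E)) *\<^sub>R x i" "(mu * betaw y (y i)) *\<^sub>R W$(y i)"]
        E0 K2' N0 mu_pos bpos[of "y i"] by (simp add: abs_mult)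
    hence nB: "norm (B i k) \<le> N * exp Buv * Bxv + mu * Mb * BWv" using coef bb[of "y i"] by linarith
    have "norm (G i k) \<le> norm (c i k) + (norm (A i k) + norm (B i k))"
    proof -
      have "norm (axis k (A i k) + axis (y i) (B i k)) \<le> norm (A i k) + norm (B i k)"
        using norm_triangle_ineq[of "axis k (A i k)" "axis (y i) (B i k)"] by (simp add: norm_axis_gen)
      thus ?thesis unfolding G_def
        using norm_Pair_le[of "axis i (c i k)" "axis k (A i k) + axis (y i) (B i k)"]
        by (simp add: norm_axis_gen)
    qed
    also have "\<dots> \<le> Bf x y mu"
      unfolding Bf_def N_def[symmetric] Buv_def[symmetric] Bxv_def[symmetric] Mb_def[symmetric]
        BWv_def[symmetric]
      using add_mono[OF c1 add_mono[OF nA nB]] by (simp add: mult_ac)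
    finally show ?thesis .
  qed
  define S where "S i = (UNIV :: 'k set) - {y i}" for i
  have cardS: "real (card (S i)) = K - 1" for i
    unfolding S_def K_def by (simp add: card_Diff_singleton of_nat_diff)
  define Gt where "Gt = (\<Sum>i\<in>UNIV. \<Sum>k\<in>S i. ((1 / N) * (1 / (K - 1))) *\<^sub>R G i k)"
  have ft: "ftot x y mu = (\<lambda>p. \<Sum>i\<in>UNIV. (1 / N) * (\<Sum>k\<in>S i. (1 / (K - 1)) * fik x y mu i k p))"
    unfolding ftot_def N_def K_def S_def by (rule ext) simp
  have "GDERIV (ftot x y mu) (u, W) :> Gt"
  proof -
    have "(ftot x y mu has_derivative
        (\<lambda>h. \<Sum>i\<in>UNIV. (1 / N) * (\<Sum>k\<in>S i. (1 / (K - 1)) * (h \<bullet> G i k)))) (at (u, W))"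
      unfolding ft using D unfolding gderiv_def
      by (intro has_derivative_sum has_derivative_mult_right) auto
    moreover have "(\<lambda>h. \<Sum>i\<in>UNIV. (1 / N) * (\<Sum>k\<in>S i. (1 / (K - 1)) * (h \<bullet> G i k))) = (\<lambda>h. h \<bullet> Gt)"
      unfolding Gt_def by (simp add: inner_sum_right sum_distrib_left mult.assoc)
    ultimately show ?thesis unfolding gderiv_def by simp
  qed
  moreover have "norm Gt \<le> Bf x y mu"
  proof -
    have "norm Gt \<le> (\<Sum>i\<in>UNIV. \<Sum>k\<in>S i. norm (((1 / N) * (1 / (K - 1))) *\<^sub>R G i k))"
      unfolding Gt_def by (rule order_trans[OF norm_sum]) (intro sum_mono norm_sum)
    also have "\<dots> \<le> (\<Sum>i\<in>UNIV. \<Sum>k\<in>S i. ((1 / N) * (1 / (K - 1))) * Bf x y mu)"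
    proof (intro sum_mono)
      fix i k
      have "N * (K - 1) > 0" using N0 K2' by simp
      thus "norm (((1 / N) * (1 / (K - 1))) *\<^sub>R G i k) \<le> ((1 / N) * (1 / (K - 1))) * Bf x y mu"
        using GB[of i k] by (simp add: divide_right_mono)
    qed
    also have "\<dots> = Bf x y mu"
      using cardS N0 K2' unfolding N_def by simp
    finally show ?thesis .
  qed
  ultimately show ?thesis using D GB by blast
qed
end
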